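(* Let $d\ge2$, $N\in\mathbb N$ and $\theta>0$. Let $\{X(t)\}_{t\ge0}$ be the $d$-types Wright–Fisher diffusion with symmetric parent-independent mutation at rate $\theta$, and $\{k(t)\}_{t\ge0}$ the $d$-types Moran model with population size $N$ and symmetric parent-independent mutation at rate $\theta$. Define, for $x=(x_1,\dots,x_{d-1})$ in the simplex and $k=(k_1,\dots,k_{d-1})\in\mathbb N_0^{d-1}$ with $\sum_jk_j\le N$, $\tilde D_N(x,k)=\prod_{i=1}^d\frac{x_i^{k_i}}{\Gamma(\frac{2\theta}{d-1}+k_i)}$, where $x_d=1-\sum_{j=1}^{d-1}x_j$ and $k_d=N-\sum_{j=1}^{d-1}k_j$. Then these two processes are dual with duality function $\tilde D_N$: for all such $x,k$ and all $t>0$, $\mathbb E_x\tilde D_N(X(t),k)=\widehat{\mathbb E}_k\tilde D_N(x,k(t))$.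
   Context: $\mathbb N_0=\{0,1,2,\dots\}$, $e_i$ the $i$-th unit vector. The $d$-types Wright–Fisher model with symmetric parent-independent mutation at rate $\theta$ is the diffusion on the simplex $\{x\in\mathbb R^{d-1}:x_i\ge0,\ \sum_ix_i\le1\}$ with generator $\mathscr L^{WF}_{d,\theta}g(x)=\sum_{i=1}^{d-1}\frac12x_i(1-x_i)\partial^2_{x_i}g(x)-\sum_{1\le i<j\le d-1}x_ix_j\partial_{x_i}\partial_{x_j}g(x)+\frac{\theta}{d-1}\sum_{i=1}^{d-1}(1-dx_i)\partial_{x_i}g(x)$. The $d$-types Moran model with population size $N$ and symmetric parent-independent mutation at rate $\theta$ is the Markov process on $\{k\in\mathbb N_0^{d-1}:\sum_jk_j\le N\}$ with generator $\mathscr L^{Mor}_{N,d,\theta}g(k)=\frac12\sum_{1\le i<j\le d-1}\big[k_i(k_j+\frac{2\theta}{d-1})(g(k-e_i+e_j)-g(k))+k_j(k_i+\frac{2\theta}{d-1})(g(k+e_i-e_j)-g(k))\big]+\frac12\sum_{i=1}^{d-1}\big[(N-\sum_{j=1}^{d-1}k_j)(k_i+\frac{2\theta}{d-1})(g(k+e_i)-g(k))+k_i(N-\sum_{j=1}^{d-1}k_j+\frac{2\theta}{d-1})(g(k-e_i)-g(k))\big]$. $\mathbb E_x$ and $\widehat{\mathbb E}_k$ denote expectations for the respective processes started at $x$ and $k$. *)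

theory Defs
  imports "HOL-Probability.Probability"
begin

text \<open>Coordinates x_1..x_(d-1) are indexed by a finite linearly ordered type 'n::{finite,linorder},
  so d = CARD('n::{finite,linorder}) + 1 \<ge> 2.\<close>

definition wf_simplex :: "(real ^ 'n::{finite,linorder}) set" where
  "wf_simplex = {x. (\<forall>i. 0 \<le> x $ i) \<and> (\<Sum>i\<in>UNIV. x $ i) \<le> 1}"

definition moran_states :: "nat \<Rightarrow> ('n::{finite,linorder} \<Rightarrow> nat) set" where
  "moran_states N = {k. (\<Sum>i\<in>UNIV. k i) \<le> N}"

definition part :: "'n::{finite,linorder} \<Rightarrow> (real ^ 'n::{finite,linorder} \<Rightarrow> real) \<Rightarrow> real ^ 'n::{finite,linorder} \<Rightarrow> real" where
  "part i g x = deriv (\<lambda>h. g (x + h *\<^sub>R axis i 1)) 0"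

definition wf_gen :: "real \<Rightarrow> (real ^ 'n::{finite,linorder} \<Rightarrow> real) \<Rightarrow> real ^ 'n::{finite,linorder} \<Rightarrow> real" where
  "wf_gen \<theta> g x =
     (let d = real (CARD('n::{finite,linorder}) + 1) in
       (\<Sum>i\<in>UNIV. 1/2 * x$i * (1 - x$i) * part i (part i g) x)
       - (\<Sum>(i,j)\<in>{(i,j). i < j}. x$i * x$j * part i (part j g) x)
       + \<theta> / (d - 1) * (\<Sum>i\<in>UNIV. (1 - d * x$i) * part i g x))"

definition moran_gen :: "nat \<Rightarrow> real \<Rightarrow> (('n::{finite,linorder} \<Rightarrow> nat) \<Rightarrow> real) \<Rightarrow> ('n::{finite,linorder} \<Rightarrow> nat) \<Rightarrow> real" where
  "moran_gen N \<theta> g k =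
     (let d = real (CARD('n::{finite,linorder}) + 1); c = 2 * \<theta> / (d - 1); r = real N - real (\<Sum>j\<in>UNIV. k j) in
       1/2 * (\<Sum>(i,j)\<in>{(i,j). i < j}.
           real (k i) * (real (k j) + c) * (g (k(i := k i - 1, j := k j + 1)) - g k)
         + real (k j) * (real (k i) + c) * (g (k(i := k i + 1, j := k j - 1)) - g k))
     + 1/2 * (\<Sum>i\<in>UNIV.
           r * (real (k i) + c) * (g (k(i := k i + 1)) - g k)
         + real (k i) * (r + c) * (g (k(i := k i - 1)) - g k)))"

definition monomial :: "('n::{finite,linorder} \<Rightarrow> nat) \<Rightarrow> real ^ 'n::{finite,linorder} \<Rightarrow> real" where
  "monomial m x = (\<Prod>i\<in>UNIV. (x $ i) ^ m i)"

definition dual_fun :: "nat \<Rightarrow> real \<Rightarrow> real ^ 'n::{finite,linorder} \<Rightarrow> ('n::{finite,linorder} \<Rightarrow> nat) \<Rightarrow> real" where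
  "dual_fun N \<theta> x k =
     (let d = real (CARD('n::{finite,linorder}) + 1); c = 2 * \<theta> / (d - 1);
          xd = 1 - (\<Sum>j\<in>UNIV. x $ j); kd = N - (\<Sum>j\<in>UNIV. k j) in
       (\<Prod>i\<in>UNIV. (x $ i) ^ k i / Gamma (c + real (k i))) * (xd ^ kd / Gamma (c + real kd)))"

text \<open>P is (the transition kernel family of) the Wright-Fisher diffusion:
  E_x f(X(t)) = integral of f w.r.t. P t x.\<close>
definition is_WF_diffusion :: "real \<Rightarrow> (real \<Rightarrow> real ^ 'n::{finite,linorder} \<Rightarrow> (real ^ 'n::{finite,linorder}) measure) \<Rightarrow> bool" where
  "is_WF_diffusion \<theta> P \<longleftrightarrow>
     (\<forall>x\<in>wf_simplex. \<forall>t\<ge>0. prob_space (P t x) \<and> sets (P t x) = sets borel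
                        \<and> (AE y in P t x. y \<in> wf_simplex)) \<and>
     (\<forall>x\<in>wf_simplex. P 0 x = return borel x) \<and>
     (\<forall>x\<in>wf_simplex. \<forall>t\<ge>0. \<forall>m.
        ((\<lambda>s. \<integral>y. monomial m y \<partial>P s x) has_real_derivative
           (\<integral>y. wf_gen \<theta> (monomial m) y \<partial>P t x)) (at t within {0..}))"

text \<open>p is (the transition probability family of) the Moran model:
  hat E_k g(k(t)) = expectation of g w.r.t. p t k.\<close>
definition is_Moran_model :: "nat \<Rightarrow> real \<Rightarrow> (real \<Rightarrow> ('n::{finite,linorder} \<Rightarrow> nat) \<Rightarrow> ('n::{finite,linorder} \<Rightarrow> nat) pmf) \<Rightarrow> bool" where
  "is_Moran_model N \<theta> p \<longleftrightarrow>
     (\<forall>k\<in>moran_states N. \<forall>t\<ge>0. set_pmf (p t k) \<subseteq> moran_states N) \<and>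
     (\<forall>k\<in>moran_states N. p 0 k = return_pmf k) \<and>
     (\<forall>k\<in>moran_states N. \<forall>t\<ge>0. \<forall>g.
        ((\<lambda>s. measure_pmf.expectation (p s k) g) has_real_derivative
           measure_pmf.expectation (p t k) (moran_gen N \<theta> g)) (at t within {0..}))"

end

theory Submission
  imports Defs
begin


definition zz :: "real ^ 'n::{finite,linorder} \<Rightarrow> real" where
  "zz w = 1 - (\<Sum>j\<in>UNIV. w $ j)"

definition qf :: "('n::{finite,linorder} \<Rightarrow> nat) \<Rightarrow> nat \<Rightarrow> real ^ 'n::{finite,linorder} \<Rightarrow> real" where
  "qf a b w = (\<Prod>i\<in>UNIV. (w $ i) ^ a i) * (zz w) ^ b"

lemma axis_nth1[simp]: "axis j (1::real) $ i = (if i = j then 1 else 0)"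
  by (simp add: axis_def)

lemma axis_comp: "(w + h *\<^sub>R axis j (1::real)) $ i = w $ i + (if i = j then h else 0)"
  by (simp add: axis_def)

lemma zz_shift: "zz (w + h *\<^sub>R axis j (1::real)) = zz w - h"
proof -
  have "(\<Sum>i\<in>UNIV. (w + h *\<^sub>R axis j 1) $ i) = (\<Sum>i\<in>UNIV. w $ i + (if i = j then h else 0))"
    by (rule sum.cong) (auto simp: axis_comp)
  also have "\<dots> = (\<Sum>i\<in>UNIV. w $ i) + h" by (simp add: sum.distrib)
  finally show ?thesis by (simp add: zz_def)
qed

lemma prod_split: "(\<Prod>i\<in>UNIV. f i) = f j * (\<Prod>i\<in>UNIV-{j}. f i)" for f :: "'n::finite \<Rightarrow> real"
  by (simp add: prod.remove)

lemma qf_deriv: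
  "((\<lambda>h. qf a b (w + h *\<^sub>R axis j 1)) has_real_derivative
     (real (a j) * qf (a(j := a j - 1)) b w - real b * qf a (b - 1) w)) (at 0)"
proof -
  define R where "R = (\<Prod>i\<in>UNIV-{j}. (w $ i) ^ a i)"
  have R2: "(\<Prod>i\<in>UNIV-{j}. (w $ i) ^ (a(j := x)) i) = R" for x
    unfolding R_def by (rule prod.cong) auto
  have e: "qf a b (w + h *\<^sub>R axis j 1) = ((w$j + h) ^ a j * R) * (zz w - h) ^ b" for h
  proof -
    have "(\<Prod>i\<in>UNIV-{j}. ((w + h *\<^sub>R axis j 1) $ i) ^ a i) = R"
      unfolding R_def by (rule prod.cong) (auto simp: axis_comp)
    then show ?thesis unfolding qf_def zz_shift
      by (subst prod_split[where j=j]) (simp add: axis_comp)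
  qed
  have q1: "qf (a(j := a j - 1)) b w = (w$j)^(a j - 1) * R * (zz w)^b"
    unfolding qf_def by (subst prod_split[where j=j]) (simp add: R_def)
  have q2: "qf a (b - 1) w = (w$j)^(a j) * R * (zz w)^(b-1)"
    unfolding qf_def by (subst prod_split[where j=j]) (simp add: R_def)
  have d: "((\<lambda>h. ((w$j + h) ^ a j * R) * (zz w - h) ^ b) has_real_derivative
      (real (a j) * (w$j + 0)^(a j - 1) * 1 * R) * (zz w - 0)^b
      + ((w$j + 0) ^ a j * R) * (real b * (zz w - 0)^(b-1) * (0 - 1))) (at 0)"
    by (intro derivative_eq_intros) auto
  show ?thesis unfolding e q1 q2 using d by (simp add: algebra_simps)
qed

lemma part_qf: "part j (qf a b) = (\<lambda>w. real (a j) * qf (a(j := a j - 1)) b w - real b * qf a (b - 1) w)"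
  unfolding part_def by (rule ext, rule DERIV_imp_deriv, rule qf_deriv)



lemma pairsum:
  fixes f :: "'n::{finite,linorder} \<Rightarrow> 'n \<Rightarrow> real"
  shows "(\<Sum>(i,j)\<in>{(i,j). i < j}. f i j + f j i) = (\<Sum>i\<in>UNIV. \<Sum>j\<in>UNIV. f i j) - (\<Sum>i\<in>UNIV. f i i)"
proof -
  let ?L = "{(i::'n,j). i < j}" and ?G = "{(i::'n,j). j < i}" and ?D = "{(i::'n,j). i = j}"
  have U: "(UNIV::('n\<times>'n) set) = ?L \<union> ?G \<union> ?D" by auto
  have "(\<Sum>i\<in>UNIV. \<Sum>j\<in>UNIV. f i j) = (\<Sum>p\<in>UNIV. f (fst p) (snd p))"
    by (simp add: sum.cartesian_product UNIV_Times_UNIV[symmetric] split_def del: UNIV_Times_UNIV)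
  also have "\<dots> = (\<Sum>p\<in>?L. f (fst p) (snd p)) + (\<Sum>p\<in>?G. f (fst p) (snd p)) + (\<Sum>p\<in>?D. f (fst p) (snd p))"
    unfolding U
    by (subst sum.union_disjoint, simp, simp, force)+ simp
  also have "(\<Sum>p\<in>?G. f (fst p) (snd p)) = (\<Sum>p\<in>?L. f (snd p) (fst p))"
  proof -
    have "?G = prod.swap ` ?L" by auto
    moreover have "inj_on prod.swap ?L" by (simp add: inj_on_def)
    ultimately show ?thesis by (simp add: sum.reindex)
  qed
  also have "(\<Sum>p\<in>?D. f (fst p) (snd p)) = (\<Sum>i\<in>UNIV. f i i)"
  proof -
    have "?D = (\<lambda>i. (i,i)) ` UNIV" by auto
    moreover have "inj (\<lambda>i::'n. (i,i))" by (simp add: inj_on_def)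
    ultimately show ?thesis by (simp add: sum.reindex)
  qed
  finally show ?thesis by (simp add: sum.distrib split_def)
qed



lemma key_alg:
  fixes a w :: "'n::{finite,linorder} \<Rightarrow> real" and b c \<theta> z n d :: real
  assumes w0: "\<And>i. w i \<noteq> 0" and zdef: "z = 1 - (\<Sum>i\<in>UNIV. w i)" and z0: "z \<noteq> 0"
    and ndef: "n = real CARD('n)" and ddef: "d = n + 1" and cdef: "c = 2 * \<theta> / n"
  defines "F \<equiv> \<lambda>i. a i / w i - b / z"
  defines "E \<equiv> \<lambda>i j. F i * F j - (if i = j then a i / (w i)^2 else 0) - b / z^2"
  defines "X \<equiv> \<lambda>i j. a i * (c + a i - 1) * w j / w i - a i * (a j + c)"
  defines "Y \<equiv> \<lambda>i. b * (c + b - 1) * w i / z - b * (a i + c)"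
  defines "Z \<equiv> \<lambda>i. a i * (c + a i - 1) * z / w i - a i * (b + c)"
  shows "(\<Sum>i\<in>UNIV. 1/2 * w i * (1 - w i) * E i i)
          - (\<Sum>(i,j)\<in>{(i,j). i < j}. w i * w j * E i j)
          + \<theta> / (d - 1) * (\<Sum>i\<in>UNIV. (1 - d * w i) * F i)
       = 1/2 * (\<Sum>(i,j)\<in>{(i,j). i < j}. X i j + X j i) + 1/2 * (\<Sum>i\<in>UNIV. Y i + Z i)"
proof -
  define A where "A = (\<Sum>i\<in>UNIV. a i)"
  define W where "W = (\<Sum>i\<in>UNIV. w i)"
  define S1 where "S1 = (\<Sum>i\<in>UNIV. a i ^ 2 / w i)"
  define S2 where "S2 = (\<Sum>i\<in>UNIV. a i / w i)"
  have npos: "n > 0" using ndef by simp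
  have zW: "z = 1 - W" using zdef W_def by simp
  have sym: "E i j = E j i" for i j unfolding E_def by (auto simp: algebra_simps)
  have P1: "(\<Sum>(i,j)\<in>{(i,j). i < j}. w i * w j * E i j)
      = 1/2 * ((\<Sum>i\<in>UNIV. \<Sum>j\<in>UNIV. w i * w j * E i j) - (\<Sum>i\<in>UNIV. w i * w i * E i i))"
  proof -
    have "(\<Sum>(i,j)\<in>{(i,j). i < j}. w i * w j * E i j + w j * w i * E j i)
        = 2 * (\<Sum>(i,j)\<in>{(i,j). i < j}. w i * w j * E i j)"
      by (simp add: sum_distrib_left split_def sym mult.assoc)
    with pairsum[of "\<lambda>i j. w i * w j * E i j"] show ?thesis by simp
  qed
  have P2: "(\<Sum>(i,j)\<in>{(i,j). i < j}. X i j + X j i)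
      = (\<Sum>i\<in>UNIV. \<Sum>j\<in>UNIV. X i j) - (\<Sum>i\<in>UNIV. X i i)"
    by (rule pairsum)
  have wF: "(\<Sum>i\<in>UNIV. w i * F i) = A - b * W / z"
  proof -
    have "(\<Sum>i\<in>UNIV. w i * F i) = (\<Sum>i\<in>UNIV. a i - (b / z) * w i)"
      by (rule sum.cong) (auto simp: F_def field_simps w0 z0)
    then show ?thesis by (simp add: sum_subtractf sum_distrib_left[symmetric] sum_divide_distrib[symmetric] A_def W_def)
  qed
  have Q1: "(\<Sum>i\<in>UNIV. w i * E i i) = S1 - 2*A*b/z + b^2*W/z^2 - S2 - b*W/z^2"
  proof -
    have "(\<Sum>i\<in>UNIV. w i * E i i) = (\<Sum>i\<in>UNIV. a i ^ 2 / w i - (2*b/z) * a i + (b^2/z^2 - b/z^2) * w i - a i / w i)"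
      by (rule sum.cong) (auto simp: E_def F_def field_simps w0 z0 power2_eq_square)
    also have "\<dots> = S1 - (2*b/z) * A + (b^2/z^2 - b/z^2) * W - S2"
      by (simp only: sum_subtractf sum.distrib sum_distrib_left[symmetric] sum_distrib_right[symmetric] sum_constant A_def[symmetric] W_def[symmetric] S1_def[symmetric] S2_def[symmetric]; (simp add: algebra_simps)?)
    finally show ?thesis by (simp add: field_simps)
  qed
  have Q2: "(\<Sum>i\<in>UNIV. \<Sum>j\<in>UNIV. w i * w j * E i j) = (A - b*W/z)^2 - A - b*W^2/z^2"
  proof -
    have "(\<Sum>i\<in>UNIV. \<Sum>j\<in>UNIV. w i * w j * E i j)
       = (\<Sum>i\<in>UNIV. \<Sum>j\<in>UNIV. (w i * F i) * (w j * F j) - (if i = j then a i else 0) - (b/z^2) * (w i * w j))"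
      by (intro sum.cong) (auto simp: E_def field_simps w0 z0 power2_eq_square)
    also have "\<dots> = (\<Sum>i\<in>UNIV. w i * F i) * (\<Sum>j\<in>UNIV. w j * F j) - A - (b/z^2) * (W * W)"
    proof -
      have e1: "(\<Sum>i\<in>UNIV. \<Sum>j\<in>UNIV. (w i * F i) * (w j * F j)) = (\<Sum>i\<in>UNIV. w i * F i) * (\<Sum>j\<in>UNIV. w j * F j)"
        by (rule sum_product[symmetric])
      have e2: "(\<Sum>i\<in>UNIV. \<Sum>j\<in>UNIV. (if i = j then a i else 0)) = A"
        by (simp add: A_def)
      have e3: "(\<Sum>i\<in>UNIV. \<Sum>j\<in>UNIV. (b/z^2) * (w i * w j)) = (b/z^2) * (W * W)"
        by (simp only: sum_distrib_left[symmetric] sum_distrib_right[symmetric] W_def)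
      show ?thesis by (simp only: sum_subtractf e1 e2 e3)
    qed
    finally show ?thesis using wF by (simp add: power2_eq_square)
  qed
  have Q3: "(\<Sum>i\<in>UNIV. (1 - d * w i) * F i) = S2 - n*b/z - d*A + d*b*W/z"
  proof -
    have "(\<Sum>i\<in>UNIV. (1 - d * w i) * F i) = (\<Sum>i\<in>UNIV. a i / w i - b/z - d * a i + (d*b/z) * w i)"
      by (rule sum.cong) (auto simp: F_def field_simps w0 z0)
    also have "\<dots> = S2 - real CARD('n) * (b/z) - d * A + (d*b/z) * W"
      by (simp only: sum_subtractf sum.distrib sum_distrib_left[symmetric] sum_distrib_right[symmetric] sum_constant A_def[symmetric] W_def[symmetric] S1_def[symmetric] S2_def[symmetric]; (simp add: algebra_simps)?)
    finally show ?thesis by (simp add: field_simps ndef)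
  qed
  have Q4: "(\<Sum>i\<in>UNIV. \<Sum>j\<in>UNIV. X i j) = (S1 + (c - 1) * S2) * W - A^2 - c*n*A"
  proof -
    have "(\<Sum>i\<in>UNIV. \<Sum>j\<in>UNIV. X i j)
        = (\<Sum>i\<in>UNIV. \<Sum>j\<in>UNIV. (a i ^ 2 / w i + (c - 1) * (a i / w i)) * w j - a i * a j - c * a i)"
      by (intro sum.cong) (auto simp: X_def field_simps w0 z0 power2_eq_square)
    also have "\<dots> = (\<Sum>i\<in>UNIV. (a i ^ 2 / w i + (c - 1) * (a i / w i)) * W - a i * A - real CARD('n) * (c * a i))"
      by (simp only: sum_subtractf sum.distrib sum_distrib_left[symmetric] sum_distrib_right[symmetric] sum_constant A_def[symmetric] W_def[symmetric] S1_def[symmetric] S2_def[symmetric]; (simp add: algebra_simps)?)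
    also have "\<dots> = (S1 + (c - 1) * S2) * W - A * A - real CARD('n) * (c * A)"
      by (simp only: sum_subtractf sum.distrib sum_distrib_left[symmetric] sum_distrib_right[symmetric] sum_constant A_def[symmetric] W_def[symmetric] S1_def[symmetric] S2_def[symmetric]; (simp add: algebra_simps)?)
    also have "\<dots> = (S1 + (c - 1) * S2) * W - A * A - c * n * A" by (simp add: ndef)
    finally show ?thesis by (simp add: power2_eq_square)
  qed
  have Q5: "(\<Sum>i\<in>UNIV. X i i) = - A"
    by (simp add: X_def field_simps w0 A_def sum_negf)
  have Q6: "(\<Sum>i\<in>UNIV. Y i + Z i) = b*(c+b-1)*W/z - b*A - b*n*c + (S1 + (c - 1) * S2) * z - A*(b+c)"
  proof -
    have "(\<Sum>i\<in>UNIV. Y i + Z i) = (\<Sum>i\<in>UNIV. (b*(c+b-1)/z) * w i - b * a i - b * c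
         + (a i ^ 2 / w i + (c - 1) * (a i / w i)) * z - (b + c) * a i)"
      by (rule sum.cong) (auto simp: Y_def Z_def field_simps w0 z0 power2_eq_square)
    also have "\<dots> = (b*(c+b-1)/z) * W - b * A - real CARD('n) * (b * c) + (S1 + (c - 1) * S2) * z - (b + c) * A"
      by (simp only: sum_subtractf sum.distrib sum_distrib_left[symmetric] sum_distrib_right[symmetric] sum_constant A_def[symmetric] W_def[symmetric] S1_def[symmetric] S2_def[symmetric]; (simp add: algebra_simps)?)
    finally show ?thesis by (simp add: ndef algebra_simps)
  qed
  have L: "(\<Sum>i\<in>UNIV. 1/2 * w i * (1 - w i) * E i i) - (\<Sum>(i,j)\<in>{(i,j). i < j}. w i * w j * E i j)
      = 1/2 * (\<Sum>i\<in>UNIV. w i * E i i) - 1/2 * (\<Sum>i\<in>UNIV. \<Sum>j\<in>UNIV. w i * w j * E i j)"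
  proof -
    have "(\<Sum>i\<in>UNIV. 1/2 * w i * (1 - w i) * E i i) = 1/2 * (\<Sum>i\<in>UNIV. w i * E i i) - 1/2 * (\<Sum>i\<in>UNIV. w i * w i * E i i)"
      by (simp add: sum_distrib_left sum_subtractf[symmetric] algebra_simps diff_divide_distrib)
    then show ?thesis unfolding P1 by (simp add: right_diff_distrib)
  qed
  show ?thesis
  proof -
    have Wz: "W = 1 - z" using zW by simp
    have nz: "n \<noteq> 0" using npos by simp
    show ?thesis
    unfolding L P2 Q1 Q2 Q3 Q4 Q5 Q6
    unfolding ddef cdef Wz
    by (simp add: field_simps power2_eq_square nz z0)
  qed
qed



lemma part2_qf:
  "part i (part j (\<lambda>w. K * qf a b w)) w =
     K * (real (a j) * (real ((a(j := a j - 1)) i) * qf ((a(j := a j - 1))(i := (a(j := a j - 1)) i - 1)) b w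
              - real b * qf (a(j := a j - 1)) (b - 1) w)
        - real b * (real (a i) * qf (a(i := a i - 1)) (b - 1) w - real (b - 1) * qf a (b - 1 - 1) w))"
proof -
  have pj: "part j (\<lambda>w. K * qf a b w) = (\<lambda>w. K * (real (a j) * qf (a(j := a j - 1)) b w - real b * qf a (b - 1) w))"
    unfolding part_def
    by (rule ext, rule DERIV_imp_deriv, intro DERIV_cmult qf_deriv)
  show ?thesis unfolding pj unfolding part_def
    by (rule DERIV_imp_deriv, intro DERIV_cmult DERIV_diff qf_deriv)
qed

lemma part1_qf:
  "part j (\<lambda>w. K * qf a b w) w = K * (real (a j) * qf (a(j := a j - 1)) b w - real b * qf a (b - 1) w)"
  unfolding part_def by (rule DERIV_imp_deriv, intro DERIV_cmult qf_deriv)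

lemma qsh1:
  assumes "w $ j \<noteq> 0"
  shows "real (a j) * qf (a(j := a j - 1)) b w = real (a j) * qf a b w / w $ j"
proof (cases "a j = 0")
  case False
  have "qf a b w = w $ j * qf (a(j := a j - 1)) b w"
  proof -
    have "(\<Prod>i\<in>UNIV-{j}. (w $ i) ^ (a(j := a j - 1)) i) = (\<Prod>i\<in>UNIV-{j}. (w $ i) ^ a i)"
      by (rule prod.cong) auto
    moreover have "(w $ j) ^ a j = w $ j * (w $ j) ^ (a j - 1)"
      using False by (metis Suc_pred' neq0_conv power_Suc)
    ultimately show ?thesis unfolding qf_def
      by (subst (1 2) prod_split[where j=j]) simp
  qed
  then show ?thesis using assms by simp
qed simp

lemma qsh2:
  assumes "zz w \<noteq> 0"
  shows "real b * qf a (b - 1) w = real b * qf a b w / zz w"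
proof (cases "b = 0")
  case False
  have "qf a b w = zz w * qf a (b - 1) w"
    unfolding qf_def using False by (metis Suc_pred' neq0_conv power_Suc mult.left_commute)
  then show ?thesis using assms by simp
qed simp

lemma real_pred_mult: "real (x::nat) * real (x - 1) = real x * (real x - 1)"
  by (cases x) auto

lemma part1_rat:
  assumes "\<And>i. w $ i \<noteq> 0" "zz w \<noteq> 0"
  shows "part j (\<lambda>w. K * qf a b w) w = K * qf a b w * (real (a j) / w $ j - real b / zz w)"
  unfolding part1_qf qsh1[OF assms(1)] qsh2[OF assms(2)] by (simp add: field_simps)

lemma part2_rat:
  fixes a :: "'n::{finite,linorder} \<Rightarrow> nat" and b :: nat and w :: "real ^ 'n::{finite,linorder}"
  assumes w0: "\<And>i. w $ i \<noteq> 0" and z0: "zz w \<noteq> 0"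
  defines "F \<equiv> \<lambda>i. real (a i) / w $ i - real b / zz w"
  shows "part i (part j (\<lambda>w. K * qf a b w)) w =
     K * qf a b w * (F i * F j - (if i = j then real (a i) / (w $ i)^2 else 0) - real b / (zz w)^2)"
proof -
  define a' where "a' = a(j := a j - 1)"
  define Q where "Q = qf a b w"
  define z where "z = zz w"
  have h1: "real (a' i) * qf (a'(i := a' i - 1)) b w = real (a' i) * qf a' b w / w $ i"
    by (rule qsh1[OF w0])
  have h2: "real b * qf a' (b - 1) w = real b * qf a' b w / z"
    unfolding z_def by (rule qsh2[OF z0])
  have h3: "real (a j) * qf a' b w = real (a j) * Q / w $ j"
    unfolding a'_def Q_def by (rule qsh1[OF w0])
  have h4: "real (a i) * qf (a(i := a i - 1)) (b - 1) w = real (a i) * qf a (b - 1) w / w $ i"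
    by (rule qsh1[OF w0])
  have h5: "real (b - 1) * qf a (b - 1 - 1) w = real (b - 1) * qf a (b - 1) w / z"
    unfolding z_def by (rule qsh2[OF z0])
  have h6: "real b * qf a (b - 1) w = real b * Q / z"
    unfolding z_def Q_def by (rule qsh2[OF z0])
  have "part i (part j (\<lambda>w. K * qf a b w)) w =
     K * (real (a j) * (real (a' i) * qf (a'(i := a' i - 1)) b w - real b * qf a' (b - 1) w)
        - real b * (real (a i) * qf (a(i := a i - 1)) (b - 1) w - real (b - 1) * qf a (b - 1 - 1) w))"
    unfolding a'_def by (rule part2_qf)
  also have "\<dots> = K * ((real (a' i) / w $ i - real b / z) * (real (a j) * qf a' b w)
        - (real (a i) / w $ i - real (b - 1) / z) * (real b * qf a (b - 1) w))"
    unfolding h1 h2 h4 h5 by (simp add: algebra_simps)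
  also have "\<dots> = K * ((real (a' i) / w $ i - real b / z) * (real (a j) * Q / w $ j)
        - (real (a i) / w $ i - real (b - 1) / z) * (real b * Q / z))"
    unfolding h3 h6 ..
  also have "\<dots> = K * Q * (F i * F j - (if i = j then real (a i) / (w $ i)^2 else 0) - real b / z^2)"
  proof -
    have rb: "real b * real (b - 1) = real b * (real b - 1)" by (rule real_pred_mult)
    have ra: "real (a j) * real (a' i) = real (a j) * (real (a' i))" by simp
    have gen: "K * ((A'/x - B/z) * (Aj * Q / y) - (Ai / x - B1 / z) * (B * Q / z))
         = K * Q * ((Ai/x - B/z) * (Aj/y - B/z) - D - B / z^2)"
      if "x \<noteq> 0" "y \<noteq> 0" "z \<noteq> 0" "B * B1 = B * (B - 1)" "Aj * A' = Ai * Aj - D * x * y"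
      for A' B Aj Ai B1 D x y :: real
    proof -
      have "K * ((A'/x - B/z) * (Aj * Q / y) - (Ai / x - B1 / z) * (B * Q / z))
          = K * Q * ((Aj * A')/(x*y) - B*Aj/(z*y) - Ai*B/(x*z) + (B*B1)/(z*z))"
        using that by (simp add: field_simps)
      also have "\<dots> = K * Q * ((Ai * Aj - D * x * y)/(x*y) - B*Aj/(z*y) - Ai*B/(x*z) + (B*(B-1))/(z*z))"
        using that by simp
      also have "\<dots> = K * Q * ((Ai/x - B/z) * (Aj/y - B/z) - D - B / z^2)"
        using that by (simp add: field_simps power2_eq_square)
      finally show ?thesis .
    qed
    have Dfact: "real (a j) * real (a' i) = real (a i) * real (a j) - (if i = j then real (a i) / (w $ i)^2 else 0) * w $ i * w $ j"
    proof (cases "i = j")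
      case True
      then show ?thesis using w0[of i] real_pred_mult[of "a j"] by (simp add: a'_def power2_eq_square algebra_simps)
    next
      case False
      then show ?thesis by (simp add: a'_def)
    qed
    show ?thesis unfolding F_def z_def[symmetric]
      by (rule gen[OF w0 w0 z0[folded z_def] rb Dfact])
  qed
  finally show ?thesis unfolding Q_def z_def .
qed



definition hh :: "real \<Rightarrow> real \<Rightarrow> nat \<Rightarrow> real" where
  "hh c x e = x ^ e / Gamma (c + real e)"

lemma dual_h:
  "dual_fun N \<theta> w m = (\<Prod>i\<in>UNIV. hh (2 * \<theta> / real CARD('n)) (w $ i) (m i))
      * hh (2 * \<theta> / real CARD('n)) (zz w) (N - sum m UNIV)"
  for w :: "real ^ 'n::{finite,linorder}"
  unfolding dual_fun_def hh_def zz_def Let_def by simp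

lemma dual_qf:
  "dual_fun N \<theta> w m = inverse ((\<Prod>i\<in>UNIV. Gamma (2 * \<theta> / real CARD('n) + real (m i)))
        * Gamma (2 * \<theta> / real CARD('n) + real (N - sum m UNIV))) * qf m (N - sum m UNIV) w"
  for w :: "real ^ 'n::{finite,linorder}"
  unfolding dual_fun_def qf_def zz_def Let_def by (simp add: prod_dividef field_simps)

lemma Gamma_suc: "c > 0 \<Longrightarrow> Gamma (c + real (Suc e)) = (c + real e) * Gamma (c + real e)"
  using Gamma_plus1[of "c + real e"]
  by (simp add: add.assoc nonpos_Ints_def) (smt (verit) of_int_of_nat_eq of_nat_0_le_iff of_int_le_0_iff)

lemma hh_suc: "c > 0 \<Longrightarrow> hh c x (Suc e) = hh c x e * x / (c + real e)"
  unfolding hh_def using Gamma_suc[of c e]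
  by (simp add: field_simps)

lemma hh_pred: "c > 0 \<Longrightarrow> e \<ge> 1 \<Longrightarrow> x \<noteq> 0 \<Longrightarrow> hh c x (e - 1) = hh c x e * (c + real e - 1) / x"
proof -
  assume c: "c > 0" and e: "e \<ge> 1" and x: "x \<noteq> 0"
  obtain f where f: "e = Suc f" using e by (cases e) auto
  have "c + real f > 0" using c by simp
  then show ?thesis using hh_suc[OF c, of x f] x unfolding f by (simp add: field_simps)
qed

lemma hh_nz: "c > 0 \<Longrightarrow> x \<noteq> 0 \<Longrightarrow> hh c x e \<noteq> 0"
proof -
  assume "c > 0" "x \<noteq> 0"
  then have "Gamma (c + real e) > 0" by (intro Gamma_real_pos) (simp add: add_pos_nonneg)
  then show ?thesis using \<open>x \<noteq> 0\<close> unfolding hh_def by simp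
qed

lemma prod_upd:
  fixes f :: "'n::finite \<Rightarrow> nat \<Rightarrow> real"
  shows "(\<Prod>k\<in>UNIV. f k ((l(i := x)) k)) * f i (l i) = (\<Prod>k\<in>UNIV. f k (l k)) * f i x"
proof -
  have "(\<Prod>k\<in>UNIV-{i}. f k ((l(i := x)) k)) = (\<Prod>k\<in>UNIV-{i}. f k (l k))"
    by (rule prod.cong) auto
  then show ?thesis by (simp add: prod.remove[of UNIV i] mult_ac)
qed

lemma sum_upd:
  fixes l :: "'n::finite \<Rightarrow> nat"
  shows "sum (l(i := x)) UNIV + l i = sum l UNIV + x"
proof -
  have "(\<Sum>k\<in>UNIV-{i}. (l(i := x)) k) = (\<Sum>k\<in>UNIV-{i}. l k)"
    by (rule sum.cong) auto
  then show ?thesis by (simp add: sum.remove[of UNIV i])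
qed



locale setting =
  fixes N :: nat and \<theta> :: real and w :: "real ^ 'n::{finite,linorder}" and l :: "'n \<Rightarrow> nat"
  assumes th: "\<theta> > 0" and w0: "\<And>i. w $ i \<noteq> 0" and z0: "zz w \<noteq> 0" and lS: "sum l UNIV \<le> N"
begin

definition "c = 2 * \<theta> / real CARD('n)"
definition "Hm m = (\<Prod>k\<in>UNIV. hh c (w $ k) (m k))" for m
definition "hz e = hh c (zz w) e" for e

lemma cpos: "c > 0" unfolding c_def using th by simp

lemma phi: "dual_fun N \<theta> w m = Hm m * hz (N - sum m UNIV)"
  unfolding dual_h Hm_def hz_def c_def ..

lemma Hm_upd: "Hm (m(i := x)) * hh c (w $ i) (m i) = Hm m * hh c (w $ i) x"
  unfolding Hm_def by (rule prod_upd[of "\<lambda>k e. hh c (w $ k) e"])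

lemma hnz: "hh c (w $ i) e \<noteq> 0" by (rule hh_nz[OF cpos w0])
lemma hznz: "hz e \<noteq> 0" unfolding hz_def by (rule hh_nz[OF cpos z0])

lemma Hm_inc: "Hm (m(i := m i + 1)) = Hm m * w $ i / (c + real (m i))"
proof -
  have "Hm (m(i := m i + 1)) * hh c (w $ i) (m i) = Hm m * (hh c (w $ i) (m i) * w $ i / (c + real (m i)))"
    using Hm_upd[of m i "m i + 1"] hh_suc[OF cpos] by simp
  then have "Hm (m(i := m i + 1)) * hh c (w $ i) (m i) = (Hm m * w $ i / (c + real (m i))) * hh c (w $ i) (m i)"
    by (simp add: field_simps)
  then show ?thesis using mult_right_cancel[OF hnz[of i "m i"]] by blast
qed

lemma Hm_dec: "m i \<ge> 1 \<Longrightarrow> Hm (m(i := m i - 1)) = Hm m * (c + real (m i) - 1) / w $ i"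
proof -
  assume a: "m i \<ge> 1"
  have "Hm (m(i := m i - 1)) * hh c (w $ i) (m i) = Hm m * (hh c (w $ i) (m i) * (c + real (m i) - 1) / w $ i)"
    using Hm_upd[of m i "m i - 1"] hh_pred[OF cpos a w0] by simp
  then have "Hm (m(i := m i - 1)) * hh c (w $ i) (m i) = (Hm m * (c + real (m i) - 1) / w $ i) * hh c (w $ i) (m i)"
    by (simp add: field_simps)
  then show ?thesis using mult_right_cancel[OF hnz[of i "m i"]] by blast
qed

lemma pair_term:
  assumes ij: "i \<noteq> j"
  shows "real (l i) * (real (l j) + c) * (dual_fun N \<theta> w (l(i := l i - 1, j := l j + 1)) - dual_fun N \<theta> w l)
    = dual_fun N \<theta> w l * (real (l i) * (c + real (l i) - 1) * w $ j / w $ i - real (l i) * (real (l j) + c))"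
proof (cases "l i = 0")
  case True then show ?thesis by simp
next
  case False
  define l1 where "l1 = l(i := l i - 1)"
  have l1j: "l1 j = l j" using ij by (simp add: l1_def)
  have eq: "l(i := l i - 1, j := l j + 1) = l1(j := l1 j + 1)" using ij by (auto simp: l1_def fun_eq_iff)
  have s1: "sum l1 UNIV + l i = sum l UNIV + (l i - 1)" unfolding l1_def by (rule sum_upd)
  have s2: "sum (l1(j := l1 j + 1)) UNIV + l1 j = sum l1 UNIV + (l1 j + 1)" by (rule sum_upd)
  have ssum: "sum (l1(j := l1 j + 1)) UNIV = sum l UNIV" using s1 s2 False by simp
  have H: "Hm (l1(j := l1 j + 1)) = Hm l * (c + real (l i) - 1) / w $ i * w $ j / (c + real (l j))"
    using Hm_inc[of l1 j] Hm_dec[of l i] False unfolding l1j l1_def[symmetric] by simp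
  have cj: "c + real (l j) > 0" using cpos by simp
  have gen: "A * (B + c) * (H * (c + A - 1) / x * y / (c + B) * h - H * h) = H * h * (A * (c + A - 1) * y / x - A * (B + c))"
    if "c + B \<noteq> 0" "x \<noteq> 0" for A B H x y h :: real
  proof -
    have "B * x + x * c \<noteq> 0" using that by (metis add.commute distrib_left mult.commute mult_eq_0_iff)
    then show ?thesis using that by (simp add: field_simps)
  qed
  show ?thesis unfolding eq phi ssum H
    by (rule gen) (use cj w0 in simp_all)
qed

lemma up_term:
  "(real N - real (sum l UNIV)) * (real (l i) + c) * (dual_fun N \<theta> w (l(i := l i + 1)) - dual_fun N \<theta> w l)
    = dual_fun N \<theta> w l * (real (N - sum l UNIV) * (c + real (N - sum l UNIV) - 1) * w $ i / zz w
         - real (N - sum l UNIV) * (real (l i) + c))"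
proof (cases "sum l UNIV = N")
  case True then show ?thesis by simp
next
  case False
  define b where "b = N - sum l UNIV"
  have b1: "b \<ge> 1" using False lS by (simp add: b_def)
  have rb: "real N - real (sum l UNIV) = real b" using lS by (simp add: b_def of_nat_diff)
  have s: "sum (l(i := l i + 1)) UNIV + l i = sum l UNIV + (l i + 1)" by (rule sum_upd)
  have kd: "N - sum (l(i := l i + 1)) UNIV = b - 1" using s by (simp add: b_def)
  have hzb: "hz (b - 1) = hz b * (c + real b - 1) / zz w"
    unfolding hz_def by (rule hh_pred[OF cpos b1 z0])
  have ci: "c + real (l i) > 0" using cpos by simp
  have gen: "B * (A + c) * (H * x / (c + A) * (h * (c + B - 1) / z) - H * h) = H * h * (B * (c + B - 1) * x / z - B * (A + c))"
    if "c + A \<noteq> 0" "z \<noteq> 0" for A B H x h z :: real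
  proof -
    have "A * z + z * c \<noteq> 0" using that by (metis add.commute distrib_left mult.commute mult_eq_0_iff)
    then show ?thesis using that by (simp add: field_simps)
  qed
  show ?thesis unfolding b_def[symmetric] rb phi kd hzb Hm_inc
    by (rule gen) (use ci z0 in simp_all)
qed

lemma down_term:
  "real (l i) * ((real N - real (sum l UNIV)) + c) * (dual_fun N \<theta> w (l(i := l i - 1)) - dual_fun N \<theta> w l)
    = dual_fun N \<theta> w l * (real (l i) * (c + real (l i) - 1) * zz w / w $ i
         - real (l i) * (real (N - sum l UNIV) + c))"
proof (cases "l i = 0")
  case True then show ?thesis by simp
next
  case False
  define b where "b = N - sum l UNIV"
  have rb: "real N - real (sum l UNIV) = real b" using lS by (simp add: b_def of_nat_diff)
  have s: "sum (l(i := l i - 1)) UNIV + l i = sum l UNIV + (l i - 1)" by (rule sum_upd)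
  have kd: "N - sum (l(i := l i - 1)) UNIV = Suc b" using s False lS by (simp add: b_def)
  have hzb: "hz (Suc b) = hz b * zz w / (c + real b)"
    unfolding hz_def by (rule hh_suc[OF cpos])
  have cb: "c + real b > 0" using cpos by simp
  have li1: "l i \<ge> 1" using False by simp
  have gen: "A * (B + c) * (H * (c + A - 1) / x * (h * z / (c + B)) - H * h) = H * h * (A * (c + A - 1) * z / x - A * (B + c))"
    if "c + B \<noteq> 0" "x \<noteq> 0" for A B H x h z :: real
  proof -
    have "B * x + x * c \<noteq> 0" using that by (metis add.commute distrib_left mult.commute mult_eq_0_iff)
    then show ?thesis using that by (simp add: field_simps)
  qed
  show ?thesis unfolding b_def[symmetric] rb phi kd hzb Hm_dec[of l i, OF li1]
    by (rule gen) (use cb w0 in simp_all)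
qed

end



context setting begin

definition "bb = N - sum l UNIV"
definition "KK = inverse ((\<Prod>i\<in>UNIV. Gamma (c + real (l i))) * Gamma (c + real bb))"

lemma phi_fun: "(\<lambda>y. dual_fun N \<theta> y l) = (\<lambda>y. KK * qf l bb y)"
  unfolding KK_def bb_def c_def by (rule ext, rule dual_qf)

lemma phiw: "dual_fun N \<theta> w l = KK * qf l bb w"
  using phi_fun by metis

abbreviation "FF \<equiv> \<lambda>i. real (l i) / w $ i - real bb / zz w"
abbreviation "EE \<equiv> \<lambda>i j. FF i * FF j - (if i = j then real (l i) / (w $ i)^2 else 0) - real bb / (zz w)^2"

lemma wf_side:
  "wf_gen \<theta> (\<lambda>y. dual_fun N \<theta> y l) w = KK * qf l bb w *
     ((\<Sum>i\<in>UNIV. 1/2 * w $ i * (1 - w $ i) * EE i i)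
          - (\<Sum>(i,j)\<in>{(i,j). i < j}. w $ i * w $ j * EE i j)
          + \<theta> / (real (CARD('n) + 1) - 1) * (\<Sum>i\<in>UNIV. (1 - real (CARD('n) + 1) * w $ i) * FF i))"
proof -
  have p1: "part i (\<lambda>y. dual_fun N \<theta> y l) w = KK * qf l bb w * FF i" for i
    unfolding phi_fun by (rule part1_rat[OF w0 z0])
  have p2: "part i (part j (\<lambda>y. dual_fun N \<theta> y l)) w = KK * qf l bb w * EE i j" for i j
    unfolding phi_fun by (rule part2_rat[OF w0 z0])
  define K where "K = KK * qf l bb w"
  have a1: "(\<Sum>i\<in>UNIV. 1/2 * w $ i * (1 - w $ i) * (K * EE i i)) = K * (\<Sum>i\<in>UNIV. 1/2 * w $ i * (1 - w $ i) * EE i i)"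
    by (simp only: sum_distrib_left) (rule sum.cong, simp_all only: mult_ac)
  have a2: "(\<Sum>(i,j)\<in>{(i,j). i < j}. w $ i * w $ j * (K * EE i j)) = K * (\<Sum>(i,j)\<in>{(i,j). i < j}. w $ i * w $ j * EE i j)"
    by (simp only: sum_distrib_left split_def) (rule sum.cong, simp_all only: mult_ac)
  have a3: "(\<Sum>i\<in>UNIV. (1 - real (CARD('n) + 1) * w $ i) * (K * FF i)) = K * (\<Sum>i\<in>UNIV. (1 - real (CARD('n) + 1) * w $ i) * FF i)"
    by (simp only: sum_distrib_left) (rule sum.cong, simp_all only: mult_ac)
  show ?thesis
    unfolding wf_gen_def Let_def p1 p2 K_def[symmetric] a1 a2 a3
    by (simp only: distrib_left right_diff_distrib mult_ac)
qed

lemma moran_side: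
  "moran_gen N \<theta> (\<lambda>m. dual_fun N \<theta> w m) l = dual_fun N \<theta> w l *
     (1/2 * (\<Sum>(i,j)\<in>{(i,j). i < j}.
        (real (l i) * (c + real (l i) - 1) * w $ j / w $ i - real (l i) * (real (l j) + c))
      + (real (l j) * (c + real (l j) - 1) * w $ i / w $ j - real (l j) * (real (l i) + c)))
    + 1/2 * (\<Sum>i\<in>UNIV.
        (real bb * (c + real bb - 1) * w $ i / zz w - real bb * (real (l i) + c))
      + (real (l i) * (c + real (l i) - 1) * zz w / w $ i - real (l i) * (real bb + c))))"
proof -
  have cc: "2 * \<theta> / (real (CARD('n) + 1) - 1) = c" unfolding c_def by simp
  have S1: "(\<Sum>(i,j)\<in>{(i,j). i < j}.
           real (l i) * (real (l j) + c) * (dual_fun N \<theta> w (l(i := l i - 1, j := l j + 1)) - dual_fun N \<theta> w l)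
         + real (l j) * (real (l i) + c) * (dual_fun N \<theta> w (l(i := l i + 1, j := l j - 1)) - dual_fun N \<theta> w l))
      = dual_fun N \<theta> w l * (\<Sum>(i,j)\<in>{(i,j). i < j}.
        (real (l i) * (c + real (l i) - 1) * w $ j / w $ i - real (l i) * (real (l j) + c))
      + (real (l j) * (c + real (l j) - 1) * w $ i / w $ j - real (l j) * (real (l i) + c)))"
    unfolding sum_distrib_left
  proof (rule sum.cong[OF refl], clarify)
    fix i j :: 'n assume "i < j"
    then have ij: "i \<noteq> j" and ji: "j \<noteq> i" by auto
    have sw: "l(i := l i + 1, j := l j - 1) = l(j := l j - 1, i := l i + 1)"
      using ij by (auto simp: fun_eq_iff)
    show "real (l i) * (real (l j) + c) * (dual_fun N \<theta> w (l(i := l i - 1, j := l j + 1)) - dual_fun N \<theta> w l)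
         + real (l j) * (real (l i) + c) * (dual_fun N \<theta> w (l(i := l i + 1, j := l j - 1)) - dual_fun N \<theta> w l)
       = dual_fun N \<theta> w l * ((real (l i) * (c + real (l i) - 1) * w $ j / w $ i - real (l i) * (real (l j) + c))
      + (real (l j) * (c + real (l j) - 1) * w $ i / w $ j - real (l j) * (real (l i) + c)))"
      unfolding sw pair_term[OF ij] pair_term[OF ji] by (simp add: algebra_simps)
  qed
  have rb: "real N - real (sum l UNIV) = real bb" using lS by (simp add: bb_def of_nat_diff)
  have S2: "(\<Sum>i\<in>UNIV.
           (real N - real (sum l UNIV)) * (real (l i) + c) * (dual_fun N \<theta> w (l(i := l i + 1)) - dual_fun N \<theta> w l)
         + real (l i) * ((real N - real (sum l UNIV)) + c) * (dual_fun N \<theta> w (l(i := l i - 1)) - dual_fun N \<theta> w l))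
      = dual_fun N \<theta> w l * (\<Sum>i\<in>UNIV.
        (real bb * (c + real bb - 1) * w $ i / zz w - real bb * (real (l i) + c))
      + (real (l i) * (c + real (l i) - 1) * zz w / w $ i - real (l i) * (real bb + c)))"
    unfolding sum_distrib_left
    by (rule sum.cong[OF refl]) (simp only: up_term down_term, simp only: bb_def[symmetric] distrib_left)
  show ?thesis
    unfolding moran_gen_def Let_def cc S1 S2[unfolded rb] rb
    by (simp add: algebra_simps)
qed

lemma duality_U: "wf_gen \<theta> (\<lambda>y. dual_fun N \<theta> y l) w = moran_gen N \<theta> (\<lambda>m. dual_fun N \<theta> w m) l"
proof -
  have k: "(\<Sum>i\<in>UNIV. 1/2 * w $ i * (1 - w $ i) * EE i i)
          - (\<Sum>(i,j)\<in>{(i,j). i < j}. w $ i * w $ j * EE i j)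
          + \<theta> / (real (CARD('n) + 1) - 1) * (\<Sum>i\<in>UNIV. (1 - real (CARD('n) + 1) * w $ i) * FF i)
     = 1/2 * (\<Sum>(i,j)\<in>{(i,j). i < j}.
        (real (l i) * (c + real (l i) - 1) * w $ j / w $ i - real (l i) * (real (l j) + c))
      + (real (l j) * (c + real (l j) - 1) * w $ i / w $ j - real (l j) * (real (l i) + c)))
    + 1/2 * (\<Sum>i\<in>UNIV.
        (real bb * (c + real bb - 1) * w $ i / zz w - real bb * (real (l i) + c))
      + (real (l i) * (c + real (l i) - 1) * zz w / w $ i - real (l i) * (real bb + c)))"
    using key_alg[of "\<lambda>i. w $ i" "zz w" "real CARD('n)" "real (CARD('n) + 1)" c \<theta> "\<lambda>i. real (l i)" "real bb"]
      w0 z0 unfolding zz_def c_def by simp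
  show ?thesis unfolding wf_side moran_side k phiw ..
qed

end



lemma qf_cont[continuous_intros]: "continuous_on S (\<lambda>w. qf a b w)"
  unfolding qf_def zz_def by (intro continuous_intros)

lemma dual_cont: "continuous_on S (\<lambda>w. dual_fun N \<theta> w m)"
  unfolding dual_qf by (intro continuous_intros)

lemma wf_dual_cont:
  fixes l :: "'n::{finite,linorder} \<Rightarrow> nat"
  shows "continuous_on UNIV (\<lambda>w. wf_gen \<theta> (\<lambda>y. dual_fun N \<theta> y l) w)"
proof -
  define K where "K = inverse ((\<Prod>i\<in>UNIV. Gamma (2 * \<theta> / real CARD('n) + real (l i)))
        * Gamma (2 * \<theta> / real CARD('n) + real (N - sum l UNIV)))"
  define b where "b = N - sum l UNIV"
  have pf: "(\<lambda>y. dual_fun N \<theta> y l) = (\<lambda>y. K * qf l b y)"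
    unfolding K_def b_def by (rule ext, rule dual_qf)
  show ?thesis unfolding pf wf_gen_def Let_def part1_qf part2_qf
    by (auto intro!: continuous_intros simp: split_def)
qed

lemma moran_dual_cont: "continuous_on UNIV (\<lambda>w. moran_gen N \<theta> (\<lambda>m. dual_fun N \<theta> w m) l)"
  unfolding moran_gen_def Let_def
  by (auto intro!: continuous_intros dual_cont simp: split_def)

lemma ev_ne: "\<beta> \<noteq> 0 \<Longrightarrow> eventually (\<lambda>e. \<alpha> + \<beta> * e \<noteq> (0::real)) (at_right 0)"
proof (cases "\<alpha> = 0")
  case True
  assume "\<beta> \<noteq> 0"
  then show ?thesis unfolding eventually_at_right_field using True
    by (intro exI[of _ 1]) auto
next
  case False
  assume b: "\<beta> \<noteq> 0"
  show ?thesis unfolding eventually_at_right_field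
  proof (intro exI[of _ "\<bar>\<alpha>\<bar> / \<bar>\<beta>\<bar>"] conjI allI impI)
    show "0 < \<bar>\<alpha>\<bar> / \<bar>\<beta>\<bar>" using False b by simp
    fix y :: real assume "0 < y" "y < \<bar>\<alpha>\<bar> / \<bar>\<beta>\<bar>"
    then have "\<bar>\<beta> * y\<bar> < \<bar>\<alpha>\<bar>" using b by (simp add: abs_mult field_simps)
    then show "\<alpha> + \<beta> * y \<noteq> 0" by auto
  qed
qed

lemma duality_all:
  fixes w :: "real ^ 'n::{finite,linorder}" and l :: "'n \<Rightarrow> nat"
  assumes th: "\<theta> > 0" and lS: "sum l UNIV \<le> N"
  shows "wf_gen \<theta> (\<lambda>y. dual_fun N \<theta> y l) w = moran_gen N \<theta> (\<lambda>m. dual_fun N \<theta> w m) l"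
proof -
  define f where "f = (\<lambda>w. wf_gen \<theta> (\<lambda>y. dual_fun N \<theta> y l) w)"
  define g where "g = (\<lambda>w::real ^ 'n::{finite,linorder}. moran_gen N \<theta> (\<lambda>m. dual_fun N \<theta> w m) l)"
  define v where "v = (\<lambda>e::real. w + e *\<^sub>R (\<chi> i. 1))"
  have vi: "v e $ i = w $ i + 1 * e" for e i by (simp add: v_def)
  have vz: "zz (v e) = zz w + (- real CARD('n)) * e" for e
    by (simp add: zz_def vi sum.distrib)
  have ev: "eventually (\<lambda>e. (\<forall>i. v e $ i \<noteq> 0) \<and> zz (v e) \<noteq> 0) (at_right 0)"
    unfolding vi vz
    by (intro eventually_conj eventually_all_finite ev_ne) auto
  have ev2: "eventually (\<lambda>e. f (v e) = g (v e)) (at_right 0)"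
    using ev
  proof (rule eventually_mono)
    fix e assume h: "(\<forall>i. v e $ i \<noteq> 0) \<and> zz (v e) \<noteq> 0"
    interpret setting N \<theta> "v e" l using th h lS by unfold_locales auto
    show "f (v e) = g (v e)" unfolding f_def g_def by (rule duality_U)
  qed
  have vt: "(v \<longlongrightarrow> w) (at_right 0)"
    unfolding v_def by (intro tendsto_eq_intros) auto
  have ft: "((\<lambda>e. f (v e)) \<longlongrightarrow> f w) (at_right 0)"
  proof (rule isCont_tendsto_compose[OF _ vt])
    show "isCont f w" using wf_dual_cont[of \<theta> N l] unfolding f_def
      by (simp add: continuous_on_eq_continuous_at)
  qed
  have gt: "((\<lambda>e. g (v e)) \<longlongrightarrow> g w) (at_right 0)"
  proof (rule isCont_tendsto_compose[OF _ vt])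
    show "isCont g w" using moran_dual_cont[of N \<theta> l] unfolding g_def
      by (simp add: continuous_on_eq_continuous_at)
  qed
  have "((\<lambda>e. f (v e)) \<longlongrightarrow> g w) (at_right 0)"
    using tendsto_cong[OF ev2] gt by simp
  then have "f w = g w" using ft by (intro tendsto_unique[of "at_right (0::real)"]) auto
  then show ?thesis unfolding f_def g_def .
qed



inductive_set Pol :: "(real ^ 'n::{finite,linorder} \<Rightarrow> real) set" where
  mono: "monomial m \<in> Pol"
| cm: "f \<in> Pol \<Longrightarrow> (\<lambda>w. c * f w) \<in> Pol"
| add: "f \<in> Pol \<Longrightarrow> g \<in> Pol \<Longrightarrow> (\<lambda>w. f w + g w) \<in> Pol"

lemma monomial_qf: "monomial m = qf m 0"
  unfolding monomial_def qf_def by (rule ext) simp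

lemma Pol_deriv:
  assumes "f \<in> Pol"
  shows "(\<forall>i w. ((\<lambda>h. f (w + h *\<^sub>R axis i 1)) has_real_derivative part i f w) (at 0)) \<and> (\<forall>i. part i f \<in> Pol)"
  using assms
proof induction
  case (mono m)
  have d: "((\<lambda>h. monomial m (w + h *\<^sub>R axis i 1)) has_real_derivative real (m i) * monomial (m(i := m i - 1)) w) (at 0)" for i w
    using qf_deriv[of m 0 w i] unfolding monomial_qf by simp
  then have p: "part i (monomial m) = (\<lambda>w. real (m i) * monomial (m(i := m i - 1)) w)" for i
    unfolding part_def by (intro ext DERIV_imp_deriv)
  show ?case unfolding p using d by (auto intro: Pol.intros)
next
  case (cm f c)
  have d: "((\<lambda>h. c * f (w + h *\<^sub>R axis i 1)) has_real_derivative c * part i f w) (at 0)" for i w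
    using cm by (intro DERIV_cmult) auto
  then have p: "part i (\<lambda>w. c * f w) = (\<lambda>w. c * part i f w)" for i
    unfolding part_def by (intro ext DERIV_imp_deriv)
  show ?case unfolding p using d cm by (auto intro: Pol.intros)
next
  case (add f g)
  have d: "((\<lambda>h. f (w + h *\<^sub>R axis i 1) + g (w + h *\<^sub>R axis i 1)) has_real_derivative part i f w + part i g w) (at 0)" for i w
    using add by (intro DERIV_add) auto
  then have p: "part i (\<lambda>w. f w + g w) = (\<lambda>w. part i f w + part i g w)" for i
    unfolding part_def by (intro ext DERIV_imp_deriv)
  show ?case unfolding p using d add by (auto intro: Pol.intros)
qed

lemma Pol_part: "f \<in> Pol \<Longrightarrow> part i f \<in> Pol"
  using Pol_deriv by blast

lemma part_cm: "f \<in> Pol \<Longrightarrow> part i (\<lambda>w. c * f w) = (\<lambda>w. c * part i f w)"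
  unfolding part_def by (intro ext DERIV_imp_deriv DERIV_cmult) (use Pol_deriv[of f] in \<open>auto simp: part_def\<close>)

lemma part_add: "f \<in> Pol \<Longrightarrow> g \<in> Pol \<Longrightarrow> part i (\<lambda>w. f w + g w) = (\<lambda>w. part i f w + part i g w)"
  unfolding part_def by (intro ext DERIV_imp_deriv DERIV_add) (use Pol_deriv[of f] Pol_deriv[of g] in \<open>auto simp: part_def\<close>)

lemma Pol_mono_mult: "(\<lambda>w. monomial m w * monomial m' w) = monomial (\<lambda>i. m i + m' i)"
  unfolding monomial_def by (rule ext) (simp add: power_add prod.distrib)

lemma Pol_mult_mono: "g \<in> Pol \<Longrightarrow> (\<lambda>w. monomial m w * g w) \<in> Pol"
proof (induction rule: Pol.induct)
  case (mono m') then show ?case unfolding Pol_mono_mult by (rule Pol.mono)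
next
  case (cm f c)
  have "(\<lambda>w. monomial m w * (c * f w)) = (\<lambda>w. c * (monomial m w * f w))" by (simp add: mult_ac)
  then show ?case using cm by (auto intro: Pol.intros)
next
  case (add f g)
  have "(\<lambda>w. monomial m w * (f w + g w)) = (\<lambda>w. monomial m w * f w + monomial m w * g w)" by (simp add: algebra_simps)
  then show ?case using add by (auto intro: Pol.intros)
qed

lemma Pol_mult: "f \<in> Pol \<Longrightarrow> g \<in> Pol \<Longrightarrow> (\<lambda>w. f w * g w) \<in> Pol"
proof (induction rule: Pol.induct)
  case (mono m) then show ?case by (rule Pol_mult_mono)
next
  case (cm f c)
  have "(\<lambda>w. c * f w * g w) = (\<lambda>w. c * (f w * g w))" by (simp add: mult_ac)
  then show ?case using cm by (auto intro: Pol.intros)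
next
  case (add f1 f2)
  have "(\<lambda>w. (f1 w + f2 w) * g w) = (\<lambda>w. f1 w * g w + f2 w * g w)" by (simp add: algebra_simps)
  then show ?case using add by (auto intro: Pol.intros)
qed

lemma Pol_const: "(\<lambda>w. c) \<in> Pol"
proof -
  have e: "(\<lambda>w. c * monomial (\<lambda>_. 0) w) = (\<lambda>w. c)" unfolding monomial_def by auto
  show ?thesis using Pol.cm[OF Pol.mono[of "\<lambda>_. 0"], of c] unfolding e .
qed

lemma Pol_coord: "(\<lambda>w. w $ i) \<in> Pol"
proof -
  have "monomial (\<lambda>j. if j = i then 1 else 0) = (\<lambda>w. w $ i)"
    unfolding monomial_def by (rule ext) (simp add: if_distrib[of "\<lambda>e. _ ^ e"] prod.delta cong: if_cong)
  then show ?thesis using Pol.mono by metis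
qed

lemma Pol_diff: "f \<in> Pol \<Longrightarrow> g \<in> Pol \<Longrightarrow> (\<lambda>w. f w - g w) \<in> Pol"
  using Pol.add[of f "\<lambda>w. (-1) * g w"] Pol.cm[of g "-1"] by simp

lemma Pol_sum: "finite S \<Longrightarrow> (\<And>x. x \<in> S \<Longrightarrow> F x \<in> Pol) \<Longrightarrow> (\<lambda>w. \<Sum>x\<in>S. F x w) \<in> Pol"
proof (induction S rule: finite_induct)
  case empty then show ?case using Pol_const[of 0] by simp
next
  case (insert x S)
  then show ?case by (simp add: Pol.add)
qed

lemma Pol_pow: "f \<in> Pol \<Longrightarrow> (\<lambda>w. f w ^ k) \<in> Pol"
  by (induction k) (simp_all add: Pol_const Pol_mult)

lemmas Pol_intros = Pol_const Pol_coord Pol_diff Pol_sum Pol_pow Pol_mult Pol.add Pol.cm Pol_part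

lemma Pol_qf: "qf a b \<in> Pol"
proof -
  have "qf a b = (\<lambda>w. monomial a w * (1 - (\<Sum>j\<in>UNIV. w $ j)) ^ b)"
    unfolding qf_def monomial_def zz_def by (rule ext) simp
  also have "\<dots> \<in> Pol" by (intro Pol_intros Pol.mono) auto
  finally show ?thesis .
qed

lemma Pol_dual: "(\<lambda>y. dual_fun N \<theta> y l) \<in> Pol"
  unfolding dual_qf using Pol.cm[OF Pol_qf] .

lemma Pol_wf:
  fixes f :: "real ^ 'n::{finite,linorder} \<Rightarrow> real"
  assumes f: "f \<in> Pol"
  shows "wf_gen \<theta> f \<in> Pol"
proof -
  have "wf_gen \<theta> f = (\<lambda>x. let d = real (CARD('n) + 1) in
       (\<Sum>i\<in>UNIV. 1/2 * x$i * (1 - x$i) * part i (part i f) x)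
       - (\<Sum>(i,j)\<in>{(i,j). i < j}. x$i * x$j * part i (part j f) x)
       + \<theta> / (d - 1) * (\<Sum>i\<in>UNIV. (1 - d * x$i) * part i f x))"
    unfolding wf_gen_def ..
  also have "\<dots> \<in> Pol" unfolding Let_def split_def
    by (intro Pol_intros f) auto
  finally show ?thesis .
qed



lemma Pol_cont: "f \<in> Pol \<Longrightarrow> continuous_on UNIV f"
proof (induction rule: Pol.induct)
  case (mono m) then show ?case unfolding monomial_qf by (intro continuous_intros)
qed (auto intro!: continuous_intros)

lemma Pol_meas: "f \<in> Pol \<Longrightarrow> f \<in> borel_measurable borel"
  by (intro borel_measurable_continuous_onI Pol_cont)

lemma simplex_le1: "w \<in> wf_simplex \<Longrightarrow> 0 \<le> w $ i \<and> w $ i \<le> 1"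
proof -
  assume w: "w \<in> wf_simplex"
  then have nn: "\<forall>j. 0 \<le> w $ j" and s: "(\<Sum>j\<in>UNIV. w $ j) \<le> 1" by (auto simp: wf_simplex_def)
  have "w $ i \<le> (\<Sum>j\<in>UNIV. w $ j)" by (rule member_le_sum) (use nn in auto)
  with nn s show ?thesis by auto
qed

lemma Pol_bound: "f \<in> Pol \<Longrightarrow> \<exists>B. \<forall>w\<in>wf_simplex. \<bar>f w\<bar> \<le> B"
proof (induction rule: Pol.induct)
  case (mono m)
  have "\<bar>monomial m w\<bar> \<le> 1" if "w \<in> wf_simplex" for w
  proof -
    have "\<bar>monomial m w\<bar> = (\<Prod>i\<in>UNIV. \<bar>w $ i\<bar> ^ m i)" unfolding monomial_def by (simp add: abs_prod power_abs)
    also have "\<dots> \<le> 1" using simplex_le1[OF that] by (intro prod_le_1) (auto intro: power_le_one)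
    finally show ?thesis .
  qed
  then show ?case by blast
next
  case (cm f c)
  then obtain B where "\<forall>w\<in>wf_simplex. \<bar>f w\<bar> \<le> B" by blast
  then have "\<forall>w\<in>wf_simplex. \<bar>c * f w\<bar> \<le> \<bar>c\<bar> * B" by (simp add: abs_mult mult_left_mono)
  then show ?case by blast
next
  case (add f g)
  then obtain B1 B2 where "\<forall>w\<in>wf_simplex. \<bar>f w\<bar> \<le> B1" "\<forall>w\<in>wf_simplex. \<bar>g w\<bar> \<le> B2" by blast
  then have "\<forall>w\<in>wf_simplex. \<bar>f w + g w\<bar> \<le> B1 + B2" by (smt (verit))
  then show ?case by blast
qed

lemma Pol_integrable:
  assumes "prob_space M" "sets M = sets borel" "AE y in M. y \<in> wf_simplex" "f \<in> Pol"
  shows "integrable M f"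
proof -
  interpret prob_space M by fact
  obtain B where B: "\<forall>w\<in>wf_simplex. \<bar>f w\<bar> \<le> B" using Pol_bound[OF assms(4)] by blast
  have "AE y in M. norm (f y) \<le> B" using assms(3) by eventually_elim (use B in auto)
  moreover have "f \<in> borel_measurable M"
  proof -
    have "measurable M borel = measurable borel (borel::real measure)" by (rule measurable_cong_sets[OF assms(2) refl])
    then show ?thesis using Pol_meas[OF assms(4)] by simp
  qed
  ultimately show ?thesis by (rule integrable_const_bound)
qed

lemma wf_cm:
  fixes f :: "real ^ 'n::{finite,linorder} \<Rightarrow> real"
  assumes f: "f \<in> Pol"
  shows "wf_gen \<theta> (\<lambda>w. c * f w) x = c * wf_gen \<theta> f x"
proof -
  have p1: "part i (\<lambda>w. c * f w) = (\<lambda>w. c * part i f w)" for i by (rule part_cm[OF f])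
  have p2: "part i (\<lambda>w. c * part j f w) = (\<lambda>w. c * part i (part j f) w)" for i j
    by (rule part_cm[OF Pol_part[OF f]])
  have a1: "(\<Sum>i\<in>UNIV. 1/2 * x $ i * (1 - x $ i) * (c * part i (part i f) x)) = c * (\<Sum>i\<in>UNIV. 1/2 * x $ i * (1 - x $ i) * part i (part i f) x)"
    by (simp only: sum_distrib_left) (rule sum.cong, simp_all only: mult_ac)
  have a2: "(\<Sum>(i,j)\<in>{(i,j). i < j}. x $ i * x $ j * (c * part i (part j f) x)) = c * (\<Sum>(i,j)\<in>{(i,j). i < j}. x $ i * x $ j * part i (part j f) x)"
    by (simp only: sum_distrib_left split_def) (rule sum.cong, simp_all only: mult_ac)
  have a3: "(\<Sum>i\<in>UNIV. (1 - real (CARD('n) + 1) * x $ i) * (c * part i f x)) = c * (\<Sum>i\<in>UNIV. (1 - real (CARD('n) + 1) * x $ i) * part i f x)"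
    by (simp only: sum_distrib_left) (rule sum.cong, simp_all only: mult_ac)
  show ?thesis unfolding wf_gen_def Let_def p1 p2 a1 a2 a3
    by (simp only: distrib_left right_diff_distrib mult_ac)
qed

lemma wf_add:
  fixes f g :: "real ^ 'n::{finite,linorder} \<Rightarrow> real"
  assumes f: "f \<in> Pol" and g: "g \<in> Pol"
  shows "wf_gen \<theta> (\<lambda>w. f w + g w) x = wf_gen \<theta> f x + wf_gen \<theta> g x"
proof -
  have p1: "part i (\<lambda>w. f w + g w) = (\<lambda>w. part i f w + part i g w)" for i by (rule part_add[OF f g])
  have p2: "part i (\<lambda>w. part j f w + part j g w) = (\<lambda>w. part i (part j f) w + part i (part j g) w)" for i j
    by (rule part_add[OF Pol_part[OF f] Pol_part[OF g]])
  have b1: "(\<Sum>i\<in>UNIV. 1/2 * x $ i * (1 - x $ i) * (part i (part i f) x + part i (part i g) x))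
     = (\<Sum>i\<in>UNIV. 1/2 * x $ i * (1 - x $ i) * part i (part i f) x) + (\<Sum>i\<in>UNIV. 1/2 * x $ i * (1 - x $ i) * part i (part i g) x)"
    by (simp only: distrib_left sum.distrib)
  have b2: "(\<Sum>(i,j)\<in>{(i,j). i < j}. x $ i * x $ j * (part i (part j f) x + part i (part j g) x))
     = (\<Sum>(i,j)\<in>{(i,j). i < j}. x $ i * x $ j * part i (part j f) x) + (\<Sum>(i,j)\<in>{(i,j). i < j}. x $ i * x $ j * part i (part j g) x)"
    by (simp only: distrib_left sum.distrib split_def)
  have b3: "(\<Sum>i\<in>UNIV. (1 - real (CARD('n) + 1) * x $ i) * (part i f x + part i g x))
     = (\<Sum>i\<in>UNIV. (1 - real (CARD('n) + 1) * x $ i) * part i f x) + (\<Sum>i\<in>UNIV. (1 - real (CARD('n) + 1) * x $ i) * part i g x)"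
    by (simp only: distrib_left sum.distrib)
  show ?thesis unfolding wf_gen_def Let_def p1 p2 b1 b2 b3
    by (simp only: distrib_left)
qed

lemma Pol_fwd:
  assumes WF: "is_WF_diffusion \<theta> P" and x: "x \<in> wf_simplex" and t: "t \<ge> 0" and f: "f \<in> Pol"
  shows "((\<lambda>s. \<integral>y. f y \<partial>P s x) has_real_derivative (\<integral>y. wf_gen \<theta> f y \<partial>P t x)) (at t within {0..})"
  using f
proof induction
  case (mono m) then show ?case using WF x t unfolding is_WF_diffusion_def by blast
next
  case (cm f c)
  have "((\<lambda>s. c * (\<integral>y. f y \<partial>P s x)) has_real_derivative c * (\<integral>y. wf_gen \<theta> f y \<partial>P t x)) (at t within {0..})"
    by (intro DERIV_cmult cm.IH)
  then show ?case by (simp add: wf_cm[OF cm.hyps])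
next
  case (add f g)
  have props: "prob_space (P s x) \<and> sets (P s x) = sets borel \<and> (AE y in P s x. y \<in> wf_simplex)" if "s \<ge> 0" for s
    using WF x that unfolding is_WF_diffusion_def by blast
  have intg: "integrable (P s x) h" if "s \<ge> 0" "h \<in> Pol" for s h
    using props[OF that(1)] that(2) Pol_integrable by blast
  have d: "((\<lambda>s. (\<integral>y. f y \<partial>P s x) + (\<integral>y. g y \<partial>P s x)) has_real_derivative
       (\<integral>y. wf_gen \<theta> f y \<partial>P t x) + (\<integral>y. wf_gen \<theta> g y \<partial>P t x)) (at t within {0..})"
    by (intro DERIV_add add.IH)
  have e: "(\<integral>y. wf_gen \<theta> f y \<partial>P t x) + (\<integral>y. wf_gen \<theta> g y \<partial>P t x) = (\<integral>y. wf_gen \<theta> (\<lambda>w. f w + g w) y \<partial>P t x)"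
    unfolding wf_add[OF add.hyps]
    by (rule Bochner_Integration.integral_add[symmetric]) (intro intg t Pol_wf add.hyps)+
  show ?case unfolding e[symmetric]
  proof (rule has_field_derivative_transform_within[OF d zero_less_one])
    show "t \<in> {0..}" using t by simp
    fix s assume "s \<in> {0::real..}"
    then show "(\<integral>y. f y \<partial>P s x) + (\<integral>y. g y \<partial>P s x) = (\<integral>y. f y + g y \<partial>P s x)"
      by (intro Bochner_Integration.integral_add[symmetric] intg add.hyps) auto
  qed
qed



lemma moran_add: "moran_gen N \<theta> (\<lambda>m. g1 m + g2 m) k = moran_gen N \<theta> g1 k + moran_gen N \<theta> g2 k"
proof -
  have *: "\<And>A B x1 x2 y1 y2 z1 z2 :: real. A * ((x1 + x2) - (z1 + z2)) + B * ((y1 + y2) - (z1 + z2))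
     = (A * (x1 - z1) + B * (y1 - z1)) + (A * (x2 - z2) + B * (y2 - z2))"
    by (simp add: algebra_simps)
  show ?thesis unfolding moran_gen_def Let_def
    by (simp only: * sum.distrib split_def) (simp add: algebra_simps del: of_nat_sum)
qed

lemma moran_cmult: "moran_gen N \<theta> (\<lambda>m. c * g m) k = c * moran_gen N \<theta> g k"
proof -
  have *: "\<And>A B x y z :: real. A * (c * x - c * z) + B * (c * y - c * z) = c * (A * (x - z) + B * (y - z))"
    by (simp add: algebra_simps)
  show ?thesis unfolding moran_gen_def Let_def
    by (simp only: * sum_distrib_left[symmetric] split_def) (simp add: algebra_simps del: of_nat_sum)
qed

lemma moran_zero: "moran_gen N \<theta> (\<lambda>m. 0) k = 0"
  unfolding moran_gen_def Let_def by simp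

lemma moran_sum: "finite S \<Longrightarrow> moran_gen N \<theta> (\<lambda>m. \<Sum>l\<in>S. a l * G l m) k = (\<Sum>l\<in>S. a l * moran_gen N \<theta> (G l) k)"
proof (induction S rule: finite_induct)
  case empty then show ?case by (simp add: moran_zero)
next
  case (insert x S)
  have "moran_gen N \<theta> (\<lambda>m. \<Sum>l\<in>insert x S. a l * G l m) k = moran_gen N \<theta> (\<lambda>m. a x * G x m + (\<Sum>l\<in>S. a l * G l m)) k"
    using insert by simp
  also have "\<dots> = a x * moran_gen N \<theta> (G x) k + moran_gen N \<theta> (\<lambda>m. \<Sum>l\<in>S. a l * G l m) k"
    by (simp add: moran_add moran_cmult)
  finally show ?case using insert by simp
qed

lemma moran_int:
  assumes "\<And>m. integrable M (F m)"
  shows "(\<integral>y. moran_gen N \<theta> (\<lambda>m. F m y) l \<partial>M) = moran_gen N \<theta> (\<lambda>m. \<integral>y. F m y \<partial>M) l"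
  unfolding moran_gen_def Let_def split_def
  using assms
  by (simp add: integral_sum integral_add integral_diff integrable_sum integrable_add integrable_diff
      integrable_mult_right)

lemma moran_local:
  assumes lS: "l \<in> moran_states N" and eq: "\<And>m. m \<in> moran_states N \<Longrightarrow> g m = g' m"
  shows "moran_gen N \<theta> g l = moran_gen N \<theta> g' l"
proof -
  have sl: "sum l UNIV \<le> N" using lS by (simp add: moran_states_def)
  have pair: "real (l i) * (real (l j) + c) * (g (l(i := l i - 1, j := l j + 1)) - g l)
      = real (l i) * (real (l j) + c) * (g' (l(i := l i - 1, j := l j + 1)) - g' l)" if "i \<noteq> j" for i j c
  proof (cases "l i = 0")
    case False
    define l1 where "l1 = l(i := l i - 1)"
    have s1: "sum l1 UNIV + l i = sum l UNIV + (l i - 1)" unfolding l1_def by (rule sum_upd)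
    have s2: "sum (l1(j := l1 j + 1)) UNIV + l1 j = sum l1 UNIV + (l1 j + 1)" by (rule sum_upd)
    have l1j: "l1 j = l j" using that by (simp add: l1_def)
    have e: "l(i := l i - 1, j := l j + 1) = l1(j := l1 j + 1)" using that by (auto simp: l1_def fun_eq_iff)
    have "l(i := l i - 1, j := l j + 1) \<in> moran_states N"
      unfolding e moran_states_def using s1 s2 False sl l1j by simp
    then show ?thesis using eq[OF lS] eq by simp
  qed simp
  have up: "(real N - real (sum l UNIV)) * (real (l i) + c) * (g (l(i := l i + 1)) - g l)
      = (real N - real (sum l UNIV)) * (real (l i) + c) * (g' (l(i := l i + 1)) - g' l)" for i c
  proof (cases "sum l UNIV = N")
    case False
    have s: "sum (l(i := l i + 1)) UNIV + l i = sum l UNIV + (l i + 1)" by (rule sum_upd)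
    have "l(i := l i + 1) \<in> moran_states N" unfolding moran_states_def using s False sl by simp
    then show ?thesis using eq[OF lS] eq by simp
  qed simp
  have down: "real (l i) * c * (g (l(i := l i - 1)) - g l) = real (l i) * c * (g' (l(i := l i - 1)) - g' l)" for i c
  proof -
    have s: "sum (l(i := l i - 1)) UNIV + l i = sum l UNIV + (l i - 1)" by (rule sum_upd)
    have "l(i := l i - 1) \<in> moran_states N" unfolding moran_states_def using s sl by simp
    then show ?thesis using eq[OF lS] eq by simp
  qed
  show ?thesis unfolding moran_gen_def Let_def
  proof (intro arg_cong2[where f="\<lambda>a b. 1/2 * a + 1/2 * b"] sum.cong refl, goal_cases)
    case (1 x)
    then obtain i j where x: "x = (i, j)" "i < j" by auto
    have "j \<noteq> i" using x by simp
    from pair[OF this] pair[of i j] x(2) show ?case unfolding x(1)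
      by (smt (verit) case_prod_conv fun_upd_twist less_irrefl)
  next
    case (2 i)
    show ?case by (simp only: up down)
  qed
qed



lemma finite_moran_states: "finite (moran_states N :: ('n::{finite,linorder} \<Rightarrow> nat) set)"
proof -
  have "moran_states N \<subseteq> (Pi UNIV (\<lambda>_. {..N}) :: ('n \<Rightarrow> nat) set)"
  proof
    fix k :: "'n \<Rightarrow> nat" assume "k \<in> moran_states N"
    then have s: "sum k UNIV \<le> N" by (simp add: moran_states_def)
    have "k i \<le> N" for i using member_le_sum[of i UNIV k] s by simp
    then show "k \<in> Pi UNIV (\<lambda>_. {..N})" by auto
  qed
  moreover have "finite (Pi UNIV (\<lambda>_. {..N}) :: ('n \<Rightarrow> nat) set)"
    using finite_PiE[of "UNIV::'n set" "\<lambda>_. {..N}"] by (simp add: PiE_UNIV_domain)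
  ultimately show ?thesis by (rule finite_subset)
qed

lemma expect_sum:
  assumes "set_pmf q \<subseteq> moran_states N"
  shows "measure_pmf.expectation q g = (\<Sum>m\<in>moran_states N. pmf q m * g m)"
  using integral_measure_pmf[OF finite_moran_states, of q g] assms by auto

lemma at_interior0: "s > 0 \<Longrightarrow> at s within {0::real..} = at s"
  by (rule at_within_interior) simp

theorem theorem5p1:
  fixes \<theta> :: real and N :: nat
    and P :: "real \<Rightarrow> real ^ 'n::{finite,linorder} \<Rightarrow> (real ^ 'n::{finite,linorder}) measure"
    and p :: "real \<Rightarrow> ('n::{finite,linorder} \<Rightarrow> nat) \<Rightarrow> ('n::{finite,linorder} \<Rightarrow> nat) pmf"
  assumes "\<theta> > 0" and "N > 0"
    and "is_WF_diffusion \<theta> P"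
    and "is_Moran_model N \<theta> p"
    and "x \<in> wf_simplex" and "k \<in> moran_states N" and "t > 0"
  shows "(\<integral>y. dual_fun N \<theta> y k \<partial>P t x)
         = measure_pmf.expectation (p t k) (\<lambda>l. dual_fun N \<theta> x l)"
proof -
  note th = assms(1) and WF = assms(3) and MM = assms(4) and xS = assms(5) and kS = assms(6) and tpos = assms(7)
  define S where "S = (moran_states N :: ('n \<Rightarrow> nat) set)"
  have finS: "finite S" unfolding S_def by (rule finite_moran_states)
  define U where "U = (\<lambda>s m. \<integral>y. dual_fun N \<theta> y m \<partial>P s x)"
  have props: "prob_space (P s x) \<and> sets (P s x) = sets borel \<and> (AE y in P s x. y \<in> wf_simplex)" if "s \<ge> 0" for s
    using WF xS that unfolding is_WF_diffusion_def by blast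
  have intg: "integrable (P s x) (\<lambda>y. dual_fun N \<theta> y m)" if "s \<ge> 0" for s m
    using props[OF that] Pol_integrable Pol_dual by blast
  have Ud: "((\<lambda>r. U r l) has_real_derivative moran_gen N \<theta> (U s) l) (at s within {0..})"
    if "l \<in> S" "s \<ge> 0" for l s
  proof -
    have lN: "sum l UNIV \<le> N" using that(1) by (simp add: S_def moran_states_def)
    have "(\<integral>y. wf_gen \<theta> (\<lambda>y. dual_fun N \<theta> y l) y \<partial>P s x)
        = (\<integral>y. moran_gen N \<theta> (\<lambda>m. dual_fun N \<theta> y m) l \<partial>P s x)"
      using duality_all[OF th lN] by simp
    also have "\<dots> = moran_gen N \<theta> (U s) l"
      unfolding U_def by (rule moran_int) (rule intg[OF that(2)])
    finally show ?thesis
      using Pol_fwd[OF WF xS that(2) Pol_dual[of N \<theta> l]] unfolding U_def by simp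
  qed
  have supp: "set_pmf (p r k) \<subseteq> S" if "r \<ge> 0" for r
    using MM kS that unfolding is_Moran_model_def S_def by blast
  define ind where "ind = (\<lambda>(l::'n \<Rightarrow> nat) m. if m = l then 1 else (0::real))"
  have pmf_ind: "measure_pmf.expectation q (ind l) = pmf q l" for q l
    by (subst integral_measure_pmf[of "{l}"]) (auto simp: ind_def split: if_splits)
  define Dl where "Dl = (\<lambda>r l. measure_pmf.expectation (p r k) (moran_gen N \<theta> (ind l)))"
  have pd: "((\<lambda>r. pmf (p r k) l) has_real_derivative Dl r l) (at r within {0..})" if "r \<ge> 0" for r l
    using MM kS that unfolding is_Moran_model_def Dl_def pmf_ind[symmetric] by blast
  define W where "W = (\<lambda>s. \<Sum>l\<in>S. pmf (p (t - s) k) l * U s l)"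
  have Wd: "(W has_real_derivative 0) (at s)" if "0 < s" "s < t" for s
  proof -
    have d1: "((\<lambda>s. pmf (p (t - s) k) l) has_real_derivative Dl (t - s) l * (-1)) (at s)" for l
    proof (rule DERIV_chain2[of "\<lambda>r. pmf (p r k) l"])
      show "DERIV (\<lambda>r. pmf (p r k) l) (t - s) :> Dl (t - s) l"
        using pd[of "t - s" l] that at_interior0[of "t - s"] by simp
      show "DERIV (\<lambda>s. t - s) s :> - 1" by (intro derivative_eq_intros) auto
    qed
    have d2: "((\<lambda>r. U r l) has_real_derivative moran_gen N \<theta> (U s) l) (at s)" if "l \<in> S" for l
      using Ud[OF that, of s] \<open>0 < s\<close> at_interior0[of s] by simp
    have dW: "(W has_real_derivative (\<Sum>l\<in>S. Dl (t - s) l * (-1) * U s l + moran_gen N \<theta> (U s) l * pmf (p (t - s) k) l)) (at s)"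
      unfolding W_def by (rule DERIV_sum) (rule DERIV_mult[OF d1 d2])
    have sup: "set_pmf (p (t - s) k) \<subseteq> S" using supp[of "t - s"] that by simp
    have "(\<Sum>l\<in>S. Dl (t - s) l * U s l)
        = (\<Sum>l\<in>S. (\<Sum>m\<in>S. pmf (p (t - s) k) m * moran_gen N \<theta> (ind l) m) * U s l)"
      unfolding Dl_def using expect_sum[OF sup[unfolded S_def]] by (simp add: S_def)
    also have "\<dots> = (\<Sum>l\<in>S. \<Sum>m\<in>S. pmf (p (t - s) k) m * (U s l * moran_gen N \<theta> (ind l) m))"
      by (simp only: sum_distrib_right) (rule sum.cong[OF refl], rule sum.cong[OF refl], simp only: mult_ac)
    also have "\<dots> = (\<Sum>m\<in>S. \<Sum>l\<in>S. pmf (p (t - s) k) m * (U s l * moran_gen N \<theta> (ind l) m))"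
      by (rule sum.swap)
    also have "\<dots> = (\<Sum>m\<in>S. pmf (p (t - s) k) m * (\<Sum>l\<in>S. U s l * moran_gen N \<theta> (ind l) m))"
      by (simp only: sum_distrib_left)
    also have "\<dots> = (\<Sum>m\<in>S. pmf (p (t - s) k) m * moran_gen N \<theta> (\<lambda>m'. \<Sum>l\<in>S. U s l * ind l m') m)"
      by (simp add: moran_sum[OF finS])
    also have "\<dots> = (\<Sum>m\<in>S. pmf (p (t - s) k) m * moran_gen N \<theta> (U s) m)"
    proof (rule sum.cong[OF refl])
      fix m assume mS: "m \<in> S"
      have "moran_gen N \<theta> (\<lambda>m'. \<Sum>l\<in>S. U s l * ind l m') m = moran_gen N \<theta> (U s) m"
      proof (rule moran_local)
        show "m \<in> moran_states N" using mS by (simp add: S_def)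
        fix m' :: "'n \<Rightarrow> nat" assume "m' \<in> moran_states N"
        then show "(\<Sum>l\<in>S. U s l * ind l m') = U s m'"
          using finS by (simp add: ind_def S_def if_distrib[of "\<lambda>x. _ * x"] sum.delta' cong: if_cong)
      qed
      then show "pmf (p (t - s) k) m * moran_gen N \<theta> (\<lambda>m'. \<Sum>l\<in>S. U s l * ind l m') m
          = pmf (p (t - s) k) m * moran_gen N \<theta> (U s) m" by simp
    qed
    finally have "(\<Sum>l\<in>S. Dl (t - s) l * (-1) * U s l + moran_gen N \<theta> (U s) l * pmf (p (t - s) k) l) = 0"
      by (simp add: sum.distrib sum_negf sum_subtractf mult_ac)
    then show ?thesis using dW by simp
  qed
  have Wc: "continuous_on {0..t} W"
  proof -
    have c1: "continuous_on {0..t} (\<lambda>r. pmf (p r k) l)" for l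
      unfolding continuous_on_eq_continuous_within
    proof
      fix r assume r: "r \<in> {0..t}"
      have "continuous (at r within {0..}) (\<lambda>r. pmf (p r k) l)"
        using pd[of r l] r by (intro DERIV_continuous) auto
      then show "continuous (at r within {0..t}) (\<lambda>r. pmf (p r k) l)"
        by (rule continuous_within_subset) auto
    qed
    have c2: "continuous_on {0..t} (\<lambda>s. pmf (p (t - s) k) l)" for l
      by (rule continuous_on_compose2[OF c1[of l]]) (auto intro!: continuous_intros)
    have c3: "continuous_on {0..t} (\<lambda>r. U r l)" if "l \<in> S" for l
      unfolding continuous_on_eq_continuous_within
    proof
      fix r assume r: "r \<in> {0..t}"
      have "continuous (at r within {0..}) (\<lambda>r. U r l)"
        using Ud[OF that, of r] r by (intro DERIV_continuous) auto
      then show "continuous (at r within {0..t}) (\<lambda>r. U r l)"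
        by (rule continuous_within_subset) auto
    qed
    show ?thesis unfolding W_def by (intro continuous_on_sum continuous_on_mult c2 c3)
  qed
  have "W t = W 0" by (rule DERIV_isconst_end[OF tpos Wc Wd])
  moreover have "W t = U t k"
  proof -
    have "W t = (\<Sum>l\<in>S. pmf (return_pmf k) l * U t l)"
      using MM kS unfolding W_def is_Moran_model_def S_def by simp
    also have "\<dots> = U t k" using kS finS by (simp add: S_def pmf_return indicator_def sum.delta' cong: if_cong)
    finally show ?thesis .
  qed
  moreover have "W 0 = measure_pmf.expectation (p t k) (\<lambda>l. dual_fun N \<theta> x l)"
  proof -
    have U0: "U 0 l = dual_fun N \<theta> x l" for l
      using WF xS unfolding U_def is_WF_diffusion_def
      by (simp add: integral_return Pol_meas[OF Pol_dual])
    show ?thesis unfolding W_def U0 using expect_sum[OF supp[of t, unfolded S_def]] tpos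
      by (simp add: S_def mult_ac)
  qed
  ultimately show ?thesis unfolding U_def by simp
qed

end
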